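(* Let $N \in \mathbb{N}$, let $\lambda > 0$, and let $f = (f_j)_{j=1}^N,\ g = (g_j)_{j=1}^N \in [-\pi,\pi)^N$. Define $v = (v_j)_{j=1}^N \in \mathbb{R}^N$ by \[ v_j := \begin{cases} 0 & \text{if } |g_j - f_j| \le \pi,\\ \operatorname{sgn}(g_j - f_j) & \text{if } |g_j - f_j| > \pi. \end{cases} \] Then \[ \operatorname*{argmin}_{x \in [-\pi,\pi)^N} \sum_{j=1}^N \Big( d(g_j,x_j)^2 + \lambda\, d(f_j,x_j)^2 \Big) = \left( \frac{g + \lambda f}{1+\lambda} + \frac{\lambda}{1+\lambda}\, 2\pi\, v \right)_{2\pi}, \] i.e. the minimum of $x \mapsto \sum_{j=1}^N \big( d(g_j,x_j)^2 + \lambda d(f_j,x_j)^2 \big)$ over $x \in [-\pi,\pi)^N$ is attained at the displayed point.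
   Context: For $t \in \mathbb{R}$, $(t)_{2\pi}$ denotes the unique point of $[-\pi,\pi)$ with $t - (t)_{2\pi} \in 2\pi\mathbb{Z}$; for a vector it is applied componentwise. Points of the unit circle $\mathbb{S}^1$ are represented by angles in $[-\pi,\pi)$, and for $a,b \in [-\pi,\pi)$ the geodesic (arc-length) distance on the circle is $d(a,b) := \min_{k \in \mathbb{Z}} |b - a + 2\pi k| = |(b-a)_{2\pi}|$. *)

theory Defs
  imports Complex_Main
begin

text \<open>(t)_{2pi}: the unique point of [-pi,pi) congruent to t modulo 2 pi.\<close>
definition wrap2pi :: "real \<Rightarrow> real" where
  "wrap2pi t = t - 2 * pi * of_int \<lfloor>(t + pi) / (2 * pi)\<rfloor>"

definition circ_dist :: "real \<Rightarrow> real \<Rightarrow> real" where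
  "circ_dist a b = \<bar>wrap2pi (b - a)\<bar>"

end

theory Submission
  imports Defs
begin

lemma wrap_eq: "\<exists>k::int. wrap2pi t = t + 2*pi*k"
  unfolding wrap2pi_def by (rule exI[of _ "- \<lfloor>(t + pi) / (2 * pi)\<rfloor>"]) simp

lemma wrap_range: "wrap2pi t \<in> {-pi..<pi}"
proof -
  define q where "q = (t + pi) / (2 * pi)"
  have t: "t = 2*pi*q - pi" using pi_gt_zero unfolding q_def by (simp add: field_simps)
  have "wrap2pi t = 2*pi*(q - \<lfloor>q\<rfloor>) - pi" unfolding wrap2pi_def q_def[symmetric]
    by (subst (1) t) (simp add: algebra_simps)
  moreover have "0 \<le> q - \<lfloor>q\<rfloor>" "q - \<lfloor>q\<rfloor> < 1"
    by (simp_all add: floor_le_iff) linarith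
  ultimately show ?thesis using pi_gt_zero
    by (auto simp: mult_nonneg_nonneg)
qed

lemma wrap_min: "\<bar>wrap2pi s\<bar> \<le> \<bar>s + 2*pi*of_int k\<bar>"
proof -
  obtain k0 :: int where k0: "wrap2pi s = s + 2*pi*k0" using wrap_eq by blast
  have r: "-pi \<le> wrap2pi s" "wrap2pi s < pi" using wrap_range[of s] by auto
  show ?thesis
  proof (cases "k = k0")
    case True then show ?thesis using k0 by simp
  next
    case False
    have e: "s + 2*pi*of_int k = wrap2pi s + 2*pi*of_int (k - k0)" using k0 by (simp add: algebra_simps)
    have "\<bar>of_int (k - k0)::real\<bar> \<ge> 1" using False by linarith
    then have "\<bar>2*pi*of_int (k-k0)\<bar> \<ge> 2*pi" using pi_gt_zero
      by (simp add: abs_mult)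
    then show ?thesis unfolding e using r by linarith
  qed
qed

lemma cd_ex: "\<exists>k::int. circ_dist a b = \<bar>b - a + 2*pi*k\<bar>"
  using wrap_eq[of "b - a"] unfolding circ_dist_def by auto

lemma cd_le: "circ_dist a b \<le> \<bar>b - a + 2*pi*of_int k\<bar>"
  unfolding circ_dist_def by (rule wrap_min)

lemma quad_low:
  fixes lam y a b :: real assumes "lam > 0"
  shows "lam/(1+lam) * (a-b)^2 \<le> (y-a)^2 + lam*(y-b)^2"
proof -
  have "(1+lam)*((y-a)^2 + lam*(y-b)^2) - lam*(a-b)^2 = ((1+lam)*y - a - lam*b)^2"
    by (simp add: power2_eq_square algebra_simps)
  then have "lam*(a-b)^2 \<le> (1+lam)*((y-a)^2 + lam*(y-b)^2)" by (smt (verit) zero_le_power2)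
  then show ?thesis using assms by (simp add: divide_le_eq mult.commute)
qed

lemma coord:
  fixes lam f g x :: real
  assumes lam: "lam > 0" and f: "f \<in> {-pi..<pi}" and g: "g \<in> {-pi..<pi}"
  defines "xs \<equiv> wrap2pi ((g + lam * f) / (1 + lam) + lam / (1 + lam) * (2 * pi * (if \<bar>g - f\<bar> \<le> pi then 0 else sgn (g - f))))"
  shows "(circ_dist g xs)^2 + lam*(circ_dist f xs)^2 \<le> (circ_dist g x)^2 + lam*(circ_dist f x)^2"
proof -
  define v :: int where "v = (if \<bar>g - f\<bar> \<le> pi then 0 else if g - f > 0 then 1 else -1)"
  have vv: "(if \<bar>g - f\<bar> \<le> pi then 0 else sgn (g - f)) = (of_int v::real)"
    unfolding v_def by (auto simp: sgn_if)
  define f' where "f' = f + 2*pi*v"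
  define m where "m = (g + lam*f')/(1+lam)"
  have mdef: "(g + lam * f) / (1 + lam) + lam / (1 + lam) * (2 * pi * of_int v) = m"
    unfolding m_def f'_def by (simp add: add_divide_distrib distrib_left)
  obtain k0 :: int where k0: "xs = m + 2*pi*k0"
    using wrap_eq[of m] unfolding xs_def vv mdef by blast
  have d1: "circ_dist g xs \<le> \<bar>m - g\<bar>"
    using cd_le[of g xs "-k0"] k0 by simp
  have d2: "circ_dist f xs \<le> \<bar>m - f'\<bar>"
    using cd_le[of f xs "-k0 - v"] k0 unfolding f'_def by (simp add: algebra_simps)
  have "(circ_dist g xs)^2 + lam*(circ_dist f xs)^2 \<le> (m-g)^2 + lam*(m-f')^2"
  proof -
    have "(circ_dist g xs)^2 \<le> (m-g)^2"
      using d1 by (metis abs_ge_zero circ_dist_def power2_abs power_mono)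
    moreover have "(circ_dist f xs)^2 \<le> (m-f')^2"
      using d2 by (metis abs_ge_zero circ_dist_def power2_abs power_mono)
    ultimately show ?thesis using lam by (smt (verit) mult_left_mono)
  qed
  also have "(m-g)^2 + lam*(m-f')^2 = lam/(1+lam)*(g-f')^2"
  proof -
    have p: "1 + lam > 0" using lam by simp
    have a: "m - g = lam*(f'-g)/(1+lam)" unfolding m_def using p by (simp add: field_simps)
    have b: "m - f' = (g-f')/(1+lam)" unfolding m_def using p by (simp add: field_simps)
    have "(m-g)^2 + lam*(m-f')^2 = (lam^2 + lam) * (g-f')^2/(1+lam)^2"
      unfolding a b by (simp add: power_divide power_mult_distrib power2_commute[of f' g] add_divide_distrib distrib_right)
    also have "lam^2 + lam = lam*(1+lam)" by (simp add: power2_eq_square algebra_simps)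
    also have "lam*(1+lam)*(g-f')^2/(1+lam)^2 = lam/(1+lam)*(g-f')^2"
    proof -
      have "\<And>D. lam*(1+lam)*D/(1+lam)^2 = lam/(1+lam)*D"
        using p by (simp add: power2_eq_square)
      then show ?thesis .
    qed
    finally show ?thesis .
  qed
  finally have up: "(circ_dist g xs)^2 + lam*(circ_dist f xs)^2 \<le> lam/(1+lam)*(g-f')^2" .
  obtain k l :: int where kl: "circ_dist g x = \<bar>x - g + 2*pi*k\<bar>" "circ_dist f x = \<bar>x - f + 2*pi*l\<bar>"
    using cd_ex by metis
  have low: "lam/(1+lam)*((g - 2*pi*k) - (f - 2*pi*l))^2 \<le> (circ_dist g x)^2 + lam*(circ_dist f x)^2"
    unfolding kl power2_abs using quad_low[OF lam, of "g - 2*pi*k" "f - 2*pi*l" x]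
    by (simp add: algebra_simps)
  have key: "(g-f')^2 \<le> ((g - 2*pi*k) - (f - 2*pi*l))^2"
  proof -
    define n where "n = l - k"
    have e: "(g - 2*pi*k) - (f - 2*pi*l) = g - f + 2*pi*n" unfolding n_def by (simp add: algebra_simps)
    have "\<bar>g - f'\<bar> \<le> \<bar>g - f + 2*pi*n\<bar>"
    proof (cases "\<bar>g - f\<bar> \<le> pi")
      case True
      then have "f' = f" unfolding f'_def v_def by simp
      show ?thesis
      proof (cases "n = 0")
        case False
        then have "\<bar>real_of_int n\<bar> \<ge> 1" by linarith
        then have "\<bar>2*pi*n\<bar> \<ge> 2*pi" using pi_gt_zero by (simp add: abs_mult)
        then show ?thesis using True \<open>f' = f\<close> by linarith
      qed (simp add: \<open>f' = f\<close>)
    next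
      case False
      show ?thesis
      proof (cases "g - f > 0")
        case True
        then have fv: "f' = f + 2*pi" using False unfolding f'_def v_def by simp
        have "n \<le> -2 \<or> n = -1 \<or> n \<ge> 0" by linarith
        moreover have "n \<le> -2 \<Longrightarrow> 2*pi*n \<le> 2*pi*(-2)"
          using pi_gt_zero mult_left_mono[of "real_of_int n" "-2" "2*pi"] by simp
        moreover have "n \<ge> 0 \<Longrightarrow> 2*pi*n \<ge> 0" using pi_gt_zero by simp
        ultimately have D: "2*pi*n \<le> -4*pi \<or> 2*pi*n = -2*pi \<or> 2*pi*n \<ge> 0" by auto
        have "\<bar>g - f\<bar> > pi" using False by simp
        then show ?thesis using D fv f g True by (auto simp: abs_if)
      next
        case neg: False
        then have fv: "f' = f - 2*pi" using False unfolding f'_def v_def by simp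
        have "n \<ge> 2 \<or> n = 1 \<or> n \<le> 0" by linarith
        moreover have "n \<ge> 2 \<Longrightarrow> 2*pi*n \<ge> 2*pi*2"
          using pi_gt_zero mult_left_mono[of 2 "real_of_int n" "2*pi"] by simp
        moreover have "n \<le> 0 \<Longrightarrow> 2*pi*n \<le> 0" using pi_gt_zero by (simp add: mult_nonneg_nonpos)
        ultimately have D: "2*pi*n \<ge> 4*pi \<or> 2*pi*n = 2*pi \<or> 2*pi*n \<le> 0" by auto
        have "\<bar>g - f\<bar> > pi" using False by simp
        then have a: "g - f < -pi" "g - f > -2*pi" using f g neg by auto
        have gen: "\<And>a X p::real. a < -p \<Longrightarrow> a > -2*p \<Longrightarrow> p > 0 \<Longrightarrow> (X \<ge> 4*p \<or> X = 2*p \<or> X \<le> 0) \<Longrightarrow> \<bar>a + 2*p\<bar> \<le> \<bar>a + X\<bar>"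
          by (auto simp: abs_if)
        show ?thesis using gen[OF a pi_gt_zero D] fv by (simp add: algebra_simps)
      qed
    qed
    then show ?thesis unfolding e by (metis abs_ge_zero power2_abs power_mono)
  qed
  have "lam/(1+lam)*(g-f')^2 \<le> lam/(1+lam)*((g - 2*pi*k) - (f - 2*pi*l))^2"
    using key lam by (intro mult_left_mono) auto
  then show ?thesis using up low by linarith
qed

theorem theorem2:
  fixes N :: nat and lam :: real and f g :: "nat \<Rightarrow> real"
  assumes lam_pos: "lam > 0"
    and f_range: "\<forall>j<N. f j \<in> {-pi..<pi}"
    and g_range: "\<forall>j<N. g j \<in> {-pi..<pi}"
  defines "xs \<equiv> (\<lambda>j. wrap2pi ((g j + lam * f j) / (1 + lam) + lam / (1 + lam) * (2 * pi * (if \<bar>g j - f j\<bar> \<le> pi then 0 else sgn (g j - f j)))))"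
    and "E \<equiv> (\<lambda>x::nat \<Rightarrow> real. \<Sum>j<N. (circ_dist (g j) (x j))\<^sup>2 + lam * (circ_dist (f j) (x j))\<^sup>2)"
  shows "(\<forall>j<N. xs j \<in> {-pi..<pi}) \<and>
         (\<forall>x. (\<forall>j<N. x j \<in> {-pi..<pi}) \<longrightarrow> E xs \<le> E x)"
proof (rule conjI)
  show "\<forall>j<N. xs j \<in> {-pi..<pi}" unfolding xs_def using wrap_range by blast
  show "\<forall>x. (\<forall>j<N. x j \<in> {-pi..<pi}) \<longrightarrow> E xs \<le> E x"
  proof (intro allI impI)
  fix x :: "nat \<Rightarrow> real"
  show "E xs \<le> E x" unfolding E_def
  proof (rule sum_mono)
    fix j assume "j \<in> {..<N}"
    then show "(circ_dist (g j) (xs j))\<^sup>2 + lam * (circ_dist (f j) (xs j))\<^sup>2 \<le> (circ_dist (g j) (x j))\<^sup>2 + lam * (circ_dist (f j) (x j))\<^sup>2"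
      unfolding xs_def using coord[OF lam_pos, of "f j" "g j" "x j"] f_range g_range by auto
  qed
  qed
qed

end
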